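(* Let $(X,Y)$ be a conditionally dependent (CD) random vector with function $s$ on $(0,\infty)$. If $X$ is independent of $Y$, then $s(y)=1$ for all $y\in D_Y$. Conversely, $s(y)=1$ for all $y\in D_Y$ does not imply independence of $X$ and $Y$: there exist CD random vectors $(X,Y)$ with $s\equiv1$ on $D_Y$ for which $X$ and $Y$ are not independent.
   Context: $X$ is real-valued with distribution $F$ such that $\overline F(x)=1-F(x)>0$ for all $x\in\mathbb{R}$, and $Y$ takes values in $(0,\infty)$. Let $D_Y=\{y\in(0,\infty):\mathrm P(Y\in(y-\delta,y+\delta))>0\ \forall\delta>0\}$. For $x\in\mathbb{R}$ and $y\in D_Y$, $\mathrm P(X>x\mid Y=y)=\lim_{t\downarrow0}\mathrm P(X>x,Y\in[y,y+t))/\mathrm P(Y\in[y,y+t))$ when this limit exists. $(X,Y)$ is conditionally dependent (CD) with function $s$ if $s$ is a positive measurable function such that these conditional tails exist and $\lim_{x\to\infty}\sup_{y\in D_Y}|\mathrm P(X>x\mid Y=y)/(\overline F(x)s(y))-1|=0$. *)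

theory Defs
  imports "HOL-Probability.Probability"
begin

definition tailF :: "'a measure \<Rightarrow> ('a \<Rightarrow> real) \<Rightarrow> real \<Rightarrow> real" where
  "tailF M X x = measure M {\<omega>\<in>space M. X \<omega> > x}"

definition D_Y :: "'a measure \<Rightarrow> ('a \<Rightarrow> real) \<Rightarrow> real set" where
  "D_Y M Y = {y. 0 < y \<and> (\<forall>\<delta>>0. measure M {\<omega>\<in>space M. Y \<omega> \<in> {y-\<delta><..<y+\<delta>}} > 0)}"

definition cond_ratio :: "'a measure \<Rightarrow> ('a \<Rightarrow> real) \<Rightarrow> ('a \<Rightarrow> real) \<Rightarrow> real \<Rightarrow> real \<Rightarrow> real \<Rightarrow> real" where
  "cond_ratio M X Y x y t =
     measure M {\<omega>\<in>space M. X \<omega> > x \<and> Y \<omega> \<in> {y..<y+t}} / measure M {\<omega>\<in>space M. Y \<omega> \<in> {y..<y+t}}"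

definition cond_tail_exists :: "'a measure \<Rightarrow> ('a \<Rightarrow> real) \<Rightarrow> ('a \<Rightarrow> real) \<Rightarrow> real \<Rightarrow> real \<Rightarrow> bool" where
  "cond_tail_exists M X Y x y \<longleftrightarrow>
     (\<forall>\<^sub>F t in at_right 0. measure M {\<omega>\<in>space M. Y \<omega> \<in> {y..<y+t}} > 0) \<and>
     (\<exists>L. (cond_ratio M X Y x y \<longlongrightarrow> L) (at_right 0))"

definition cond_tail :: "'a measure \<Rightarrow> ('a \<Rightarrow> real) \<Rightarrow> ('a \<Rightarrow> real) \<Rightarrow> real \<Rightarrow> real \<Rightarrow> real" where
  "cond_tail M X Y x y = Lim (at_right 0) (cond_ratio M X Y x y)"

text \<open>(X,Y) is conditionally dependent (CD) with function s.
  The uniform condition lim_{x\<rightarrow>\<infinity>} sup_{y\<in>D_Y} |...| = 0 is written out with epsilons.\<close>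
definition CD :: "'a measure \<Rightarrow> ('a \<Rightarrow> real) \<Rightarrow> ('a \<Rightarrow> real) \<Rightarrow> (real \<Rightarrow> real) \<Rightarrow> bool" where
  "CD M X Y s \<longleftrightarrow>
     X \<in> borel_measurable M \<and> Y \<in> borel_measurable M \<and>
     (\<forall>\<omega>\<in>space M. Y \<omega> > 0) \<and>
     (\<forall>x. tailF M X x > 0) \<and>
     s \<in> borel_measurable (restrict_space borel {0<..}) \<and> (\<forall>y>0. s y > 0) \<and>
     (\<forall>x. \<forall>y\<in>D_Y M Y. cond_tail_exists M X Y x y) \<and>
     (\<forall>\<epsilon>>0. \<forall>\<^sub>F x in at_top. \<forall>y\<in>D_Y M Y.
        \<bar>cond_tail M X Y x y / (tailF M X x * s y) - 1\<bar> \<le> \<epsilon>)"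

end

theory Submission
  imports Defs
begin


lemma part1:
  assumes P: "prob_space M" and C: "CD M X Y s" and I: "prob_space.indep_var M borel X borel Y"
    and y: "y \<in> D_Y M Y"
  shows "s y = 1"
proof -
  interpret prob_space M by (rule P)
  have Xm: "X \<in> borel_measurable M" and Ym: "Y \<in> borel_measurable M" using C by (auto simp: CD_def)
  have ypos: "y > 0" using y by (simp add: D_Y_def)
  have ex: "\<And>x. cond_tail_exists M X Y x y" using C y by (auto simp: CD_def)
  have tpos: "\<And>x. tailF M X x > 0" using C by (auto simp: CD_def)
  have ct: "cond_tail M X Y x y = tailF M X x" for x
  proof -
    have ev: "\<forall>\<^sub>F t in at_right 0. measure M {\<omega>\<in>space M. Y \<omega> \<in> {y..<y+t}} > 0"
      using ex[of x] by (simp add: cond_tail_exists_def)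
    have "\<forall>\<^sub>F t in at_right 0. cond_ratio M X Y x y t = tailF M X x"
      using ev
    proof eventually_elim
      case (elim t)
      have "prob ((\<lambda>\<omega>. (X \<omega>, Y \<omega>)) -` ({x<..} \<times> {y..<y+t}) \<inter> space M) =
        prob (X -` {x<..} \<inter> space M) * prob (Y -` {y..<y+t} \<inter> space M)"
        by (rule indep_varD[OF I]) auto
      moreover have "(\<lambda>\<omega>. (X \<omega>, Y \<omega>)) -` ({x<..} \<times> {y..<y+t}) \<inter> space M
          = {\<omega>\<in>space M. X \<omega> > x \<and> Y \<omega> \<in> {y..<y+t}}" by auto
      moreover have "X -` {x<..} \<inter> space M = {\<omega>\<in>space M. X \<omega> > x}" by auto
      moreover have "Y -` {y..<y+t} \<inter> space M = {\<omega>\<in>space M. Y \<omega> \<in> {y..<y+t}}" by auto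
      ultimately show ?case using elim unfolding cond_ratio_def tailF_def by simp
    qed
    hence "(cond_ratio M X Y x y \<longlongrightarrow> tailF M X x) (at_right 0)"
      by (rule tendsto_eventually)
    thus ?thesis unfolding cond_tail_def
      by (intro tendsto_Lim) (auto simp: trivial_limit_at_right_real)
  qed
  have spos: "s y > 0" using C ypos by (auto simp: CD_def)
  have "\<bar>1 / s y - 1\<bar> \<le> e" if e: "e > 0" for e
  proof -
    have "\<forall>\<^sub>F x in at_top. \<bar>cond_tail M X Y x y / (tailF M X x * s y) - 1\<bar> \<le> e"
    proof -
      have "\<forall>\<^sub>F x in at_top. \<forall>y\<in>D_Y M Y. \<bar>cond_tail M X Y x y / (tailF M X x * s y) - 1\<bar> \<le> e"
        using C e by (simp add: CD_def)
      thus ?thesis by eventually_elim (use y in blast)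
    qed
    then obtain x where "\<bar>cond_tail M X Y x y / (tailF M X x * s y) - 1\<bar> \<le> e"
      by (auto simp: eventually_at_top_linorder)
    moreover have "cond_tail M X Y x y / (tailF M X x * s y) = 1 / s y"
      using ct[of x] tpos[of x] spos by simp
    ultimately show ?thesis by simp
  qed
  hence "\<bar>1 / s y - 1\<bar> = 0"
  proof -
    assume H: "\<And>e. e > 0 \<Longrightarrow> \<bar>1 / s y - 1\<bar> \<le> e"
    show ?thesis
    proof (rule ccontr)
      assume "\<bar>1 / s y - 1\<bar> \<noteq> 0"
      hence "\<bar>1 / s y - 1\<bar> > 0" by simp
      from H[OF half_gt_zero[OF this]] this show False by (smt (verit) field_sum_of_halves)
    qed
  qed
  thus ?thesis using spos by (simp add: divide_simps split: if_splits)
qed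



definition qq :: "(bool \<times> nat) pmf" where
  "qq = pair_pmf (bernoulli_pmf (1/2)) (geometric_pmf (1/2))"
definition gg :: "bool \<times> nat \<Rightarrow> real \<times> real" where
  "gg z = (if snd z = 0 \<and> fst z then -1 else real (snd z), if fst z then 1 else 2)"
definition MM :: "(real \<times> real) measure" where
  "MM = measure_pmf (map_pmf gg qq)"
definition YY :: "real \<times> real \<Rightarrow> real" where
  "YY \<omega> = (if snd \<omega> = 1 then 1 else 2)"

lemma pmf_qq: "pmf qq (b, n) = (1/2) ^ n * (1/2) / 2"
  by (simp add: qq_def pmf_pair)

lemma meas_MM: "measure MM {\<omega>\<in>space MM. P \<omega>} = measure_pmf.prob qq {z. P (gg z)}"
  by (simp add: MM_def vimage_def)

lemma YY_gg: "YY (gg z) = (if fst z then 1 else 2)"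
  by (simp add: YY_def gg_def)

lemma prod_set:
  assumes "x \<ge> 0"
  shows "{z. fst (gg z) > x \<and> YY (gg z) \<in> B} = {b. (if b then 1 else 2) \<in> B} \<times> {n. real n > x}"
  using assms by (auto simp: gg_def YY_def)

lemma prob_prod:
  assumes "x \<ge> 0"
  shows "measure MM {\<omega>\<in>space MM. fst \<omega> > x \<and> YY \<omega> \<in> B} =
     measure_pmf.prob (bernoulli_pmf (1/2)) {b. (if b then 1 else 2) \<in> B} *
     measure_pmf.prob (geometric_pmf (1/2)) {n. real n > x}"
  unfolding meas_MM prod_set[OF assms] qq_def
  by (rule measure_pmf_prob_product) auto

lemma tail_MM:
  assumes "x \<ge> 0"
  shows "tailF MM fst x = measure_pmf.prob (geometric_pmf (1/2)) {n. real n > x}"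
  using prob_prod[OF assms, of UNIV] by (simp add: tailF_def)

lemma tail_pos: "tailF MM fst x > 0"
proof -
  define n where "n = Suc (nat \<lceil>max x 0\<rceil>)"
  have "real n > x" unfolding n_def by linarith
  have "(False, n) \<in> set_pmf qq" by (simp add: set_pmf_iff pmf_qq)
  moreover have "(False, n) \<in> {z. fst (gg z) > x}" using \<open>real n > x\<close> by (simp add: gg_def n_def)
  ultimately have "measure_pmf.prob qq {z. fst (gg z) > x} > 0" by (rule measure_pmf_posI)
  thus ?thesis unfolding tailF_def meas_MM .
qed

lemma DY_sub: "D_Y MM YY \<subseteq> {1, 2}"
proof
  fix y assume y: "y \<in> D_Y MM YY"
  show "y \<in> {1, 2}"
  proof (rule ccontr)
    assume ny: "y \<notin> {1, 2}"
    define d where "d = min \<bar>y - 1\<bar> \<bar>y - 2\<bar>"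
    have "d > 0" using ny by (auto simp: d_def)
    hence "measure MM {\<omega>\<in>space MM. YY \<omega> \<in> {y-d<..<y+d}} > 0" using y by (auto simp: D_Y_def)
    moreover have "{\<omega>\<in>space MM. YY \<omega> \<in> {y-d<..<y+d}} = {}"
      by (auto simp: YY_def d_def abs_if split: if_splits)
    ultimately show False by (metis measure_empty less_irrefl)
  qed
qed

lemma Yevent:
  assumes "y \<in> {1, 2}" "0 < t" "t \<le> 1/2"
  shows "{\<omega>\<in>space MM. P \<omega> \<and> YY \<omega> \<in> {y..<y+t}} = {\<omega>\<in>space MM. P \<omega> \<and> YY \<omega> \<in> {y}}"
  using assms by (auto simp: YY_def)

lemma bern_single: "measure_pmf.prob (bernoulli_pmf (1/2)) {b} = 1/2"
  by (simp add: measure_pmf_single)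

lemma bern_set: "y \<in> {1, 2} \<Longrightarrow> {b. (if b then 1 else 2) \<in> {y::real}} = {y = 1}"
  by auto

lemma Yevent0:
  assumes "y \<in> {1, 2}" "0 < t" "t \<le> 1/2"
  shows "{\<omega>\<in>space MM. YY \<omega> \<in> {y..<y+t}} = {\<omega>\<in>space MM. YY \<omega> = y}"
  using assms by (auto simp: YY_def)

lemma PY: "y \<in> {1, 2} \<Longrightarrow> measure MM {\<omega>\<in>space MM. YY \<omega> = y} = 1/2"
proof -
  assume y: "y \<in> {1, 2}"
  have "measure MM {\<omega>\<in>space MM. YY \<omega> = y} = measure_pmf.prob qq ({y = 1} \<times> UNIV)"
    unfolding meas_MM using y by (intro arg_cong[where f="measure_pmf.prob qq"]) (auto simp: YY_gg)
  also have "\<dots> = measure_pmf.prob (bernoulli_pmf (1/2)) {y = 1} * measure_pmf.prob (geometric_pmf (1/2)) UNIV"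
    unfolding qq_def by (rule measure_pmf_prob_product) auto
  also have "\<dots> = 1/2" by (simp add: bern_single)
  finally show ?thesis .
qed

lemma ratio_const:
  assumes "y \<in> {1, 2}" "0 < t" "t \<le> 1/2"
  shows "cond_ratio MM fst YY x y t = measure MM {\<omega>\<in>space MM. fst \<omega> > x \<and> YY \<omega> \<in> {y}} / (1/2)"
  unfolding cond_ratio_def Yevent[OF assms] Yevent0[OF assms] PY[OF assms(1)] by simp

lemma ratio_ev:
  assumes "y \<in> {1, 2}"
  shows "\<forall>\<^sub>F t in at_right 0. cond_ratio MM fst YY x y t = measure MM {\<omega>\<in>space MM. fst \<omega> > x \<and> YY \<omega> \<in> {y}} / (1/2)"
  unfolding eventually_at_right_field
  using ratio_const[OF assms] by (intro exI[of _ "1/2"]) auto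

lemma cond_tail_MM:
  assumes "y \<in> {1, 2}"
  shows "cond_tail MM fst YY x y = measure MM {\<omega>\<in>space MM. fst \<omega> > x \<and> YY \<omega> \<in> {y}} / (1/2)"
  and "cond_tail_exists MM fst YY x y"
proof -
  have T: "(cond_ratio MM fst YY x y \<longlongrightarrow> measure MM {\<omega>\<in>space MM. fst \<omega> > x \<and> YY \<omega> \<in> {y}} / (1/2)) (at_right 0)"
    by (rule tendsto_eventually[OF ratio_ev[OF assms]])
  thus "cond_tail MM fst YY x y = measure MM {\<omega>\<in>space MM. fst \<omega> > x \<and> YY \<omega> \<in> {y}} / (1/2)"
    unfolding cond_tail_def by (intro tendsto_Lim) (auto simp: trivial_limit_at_right_real)
  have "\<forall>\<^sub>F t in at_right 0. measure MM {\<omega>\<in>space MM. YY \<omega> \<in> {y..<y+t}} > 0"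
    unfolding eventually_at_right_field
    using Yevent0[OF assms] PY[OF assms] by (intro exI[of _ "1/2"]) auto
  with T show "cond_tail_exists MM fst YY x y" unfolding cond_tail_exists_def by blast
qed

lemma cond_tail_eq:
  assumes "y \<in> {1, 2}" "x \<ge> 0"
  shows "cond_tail MM fst YY x y = tailF MM fst x"
proof -
  have "measure_pmf.prob (bernoulli_pmf (1/2)) {b. (if b then 1 else 2) \<in> {y}} = 1/2"
    by (simp only: bern_set[OF assms(1)] bern_single)
  thus ?thesis
    unfolding cond_tail_MM(1)[OF assms(1)] prob_prod[OF assms(2)] tail_MM[OF assms(2)] by simp
qed

lemma CD_MM: "CD MM fst YY (\<lambda>_. 1)"
  unfolding CD_def
proof (intro conjI allI ballI impI)
  show "fst \<in> borel_measurable MM" "YY \<in> borel_measurable MM" by (simp_all add: MM_def)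
  show "\<And>\<omega>. \<omega> \<in> space MM \<Longrightarrow> 0 < YY \<omega>" by (simp add: YY_def)
  show "\<And>x. 0 < tailF MM fst x" by (rule tail_pos)
  show "(\<lambda>_. 1::real) \<in> borel_measurable (restrict_space borel {0<..})" by simp
  show "\<And>y::real. 0 < y \<Longrightarrow> 0 < (1::real)" by simp
  show "\<And>x y. y \<in> D_Y MM YY \<Longrightarrow> cond_tail_exists MM fst YY x y"
    using DY_sub cond_tail_MM(2) by blast
  fix e :: real assume "e > 0"
  show "\<forall>\<^sub>F x in at_top. \<forall>y\<in>D_Y MM YY. \<bar>cond_tail MM fst YY x y / (tailF MM fst x * 1) - 1\<bar> \<le> e"
    unfolding eventually_at_top_linorder
  proof (intro exI[of _ 0] allI impI ballI)
    fix x y assume "x \<ge> (0::real)" "y \<in> D_Y MM YY"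
    thus "\<bar>cond_tail MM fst YY x y / (tailF MM fst x * 1) - 1\<bar> \<le> e"
      using cond_tail_eq[of y x] DY_sub tail_pos[of x] \<open>e > 0\<close> by auto
  qed
qed

lemma not_indep: "\<not> prob_space.indep_var MM borel fst borel YY"
proof
  assume I: "prob_space.indep_var MM borel fst borel YY"
  interpret prob_space MM by (simp add: MM_def prob_space_measure_pmf)
  have eq: "prob ((\<lambda>\<omega>. (fst \<omega>, YY \<omega>)) -` ({..<0} \<times> {1}) \<inter> space MM) =
        prob (fst -` {..<0} \<inter> space MM) * prob (YY -` {1} \<inter> space MM)"
    by (rule indep_varD[OF I]) auto
  have s1: "{z. fst (gg z) < 0 \<and> YY (gg z) = 1} = {(True, 0)}"
    by (auto simp: gg_def YY_def)
  have s2: "{z. fst (gg z) < 0} = {(True, 0)}"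
    by (auto simp: gg_def)
  have pt: "measure_pmf.prob qq {(True, 0)} = 1/4" by (simp add: measure_pmf_single pmf_qq)
  have e1: "(\<lambda>\<omega>. (fst \<omega>, YY \<omega>)) -` ({..<0} \<times> {1}) \<inter> space MM = {\<omega>\<in>space MM. fst \<omega> < 0 \<and> YY \<omega> = 1}" by auto
  have e2: "fst -` {..<0} \<inter> space MM = {\<omega>\<in>space MM. fst \<omega> < 0}" by auto
  have e3: "YY -` {1} \<inter> space MM = {\<omega>\<in>space MM. YY \<omega> = 1}" by auto
  have a: "prob ((\<lambda>\<omega>. (fst \<omega>, YY \<omega>)) -` ({..<0} \<times> {1}) \<inter> space MM) = 1/4"
    using meas_MM[of "\<lambda>\<omega>. fst \<omega> < 0 \<and> YY \<omega> = 1"] s1 pt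
    unfolding e1 e2 e3 by simp
  have b: "prob (fst -` {..<0} \<inter> space MM) = 1/4"
    using meas_MM[of "\<lambda>\<omega>. fst \<omega> < 0"] s2 pt
    unfolding e1 e2 e3 by simp
  have c: "prob (YY -` {1} \<inter> space MM) = 1/2"
    unfolding e3 by (rule PY) simp
  from eq a b c show False by simp
qed


theorem proposition2p6:
  shows "(\<forall>(M::'a measure) X Y s.
            prob_space M \<and> CD M X Y s \<and> prob_space.indep_var M borel X borel Y
            \<longrightarrow> (\<forall>y\<in>D_Y M Y. s y = 1)) \<and>
         (\<exists>(M::(real \<times> real) measure) X Y s.
            prob_space M \<and> CD M X Y s \<and> (\<forall>y\<in>D_Y M Y. s y = 1) \<and>
            \<not> prob_space.indep_var M borel X borel Y)"
proof
  show "\<forall>(M::'a measure) X Y s.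
            prob_space M \<and> CD M X Y s \<and> prob_space.indep_var M borel X borel Y
            \<longrightarrow> (\<forall>y\<in>D_Y M Y. s y = 1)"
    using part1 by blast
  show "\<exists>(M::(real \<times> real) measure) X Y s.
            prob_space M \<and> CD M X Y s \<and> (\<forall>y\<in>D_Y M Y. s y = 1) \<and>
            \<not> prob_space.indep_var M borel X borel Y"
    by (rule exI[of _ MM], rule exI[of _ fst], rule exI[of _ YY], rule exI[of _ "\<lambda>_. 1"])
       (simp add: CD_MM not_indep, simp add: MM_def prob_space_measure_pmf)
qed

end
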